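(* Let $f,g$ be test quantities and $\phi$ a posterior family for a model $\pi$ with data space $Y$ and parameter space $\Theta$, and let $h_y:\mathbb{R}\to\mathbb{R}$, $y\in Y$, be measurable functions with $f(\theta,y)=h_y(g(\theta,y))$ for all $y\in Y$, $\theta\in\Theta$. If either $h_y$ is strictly increasing for all $y\in Y$, or $h_y$ is strictly decreasing for all $y\in Y$, then (1) $\phi$ passes continuous SBC with respect to $f$ if and only if $\phi$ passes continuous SBC with respect to $g$; and (2) for every $M\in\mathbb{N}$, $\phi$ passes $M$-sample SBC with respect to $f$ if and only if $\phi$ passes $M$-sample SBC with respect to $g$.
   Context: Model $\pi$: prior density $\pi_{\text{prior}}(\theta)$ on $\Theta$, observation density $\pi_{\text{obs}}(y\mid\theta)$ on $Y$, $\pi_{\text{marg}}(y)=\int_\Theta\pi_{\text{obs}}(y\mid\theta)\pi_{\text{prior}}(\theta)\,\mathrm{d}\theta$, $\pi_{\text{post}}(\theta\mid y)=\pi_{\text{obs}}(y\mid\theta)\pi_{\text{prior}}(\theta)/\pi_{\text{marg}}(y)$. A posterior family is $\phi:\Theta\times Y\to\mathbb{R}^+$ with $\int_\Theta\phi(\theta\mid y)\,\mathrm{d}\theta=1$ for all $y$; a test quantity is a measurable $f:\Theta\times Y\to\mathbb{R}$. Sample quantities: for $M\in\mathbb{N}$, $\theta_1,\dots,\theta_M$ i.i.d. from $\phi(\cdot\mid y)$, $N^{\mathtt{less}}=\sum_m\mathbb{I}[f(\theta_m,y)<f(\tilde\theta,y)]$, $N^{\mathtt{equals}}=\sum_m\mathbb{I}[f(\theta_m,y)=f(\tilde\theta,y)]$,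 $K$ uniform on $\{0,\dots,N^{\mathtt{equals}}\}$, $N^{\mathtt{total}}=N^{\mathtt{less}}+K$; $R_{\phi,f}(i\mid\tilde\theta,y)=\Pr(N^{\mathtt{total}}\le i)$; $Q_{\phi,f}(i\mid y)=\int_\Theta\pi_{\text{post}}(\tilde\theta\mid y)R_{\phi,f}(i\mid\tilde\theta,y)\,\mathrm{d}\tilde\theta$; $\phi$ passes $M$-sample SBC w.r.t. $f$ if $\int_YQ_{\phi,f}(i\mid y)\pi_{\text{marg}}(y)\,\mathrm{d}y=\frac{i+1}{M+1}$ for all $i\in\{0,\dots,M-1\}$. Continuous quantities: $C_{\phi,f}(s\mid y)=\int_\Theta\mathbb{I}[f(\theta,y)\le s]\phi(\theta\mid y)\,\mathrm{d}\theta$, $D_{\phi,f}(s\mid y)=\int_\Theta\mathbb{I}[f(\theta,y)=s]\phi(\theta\mid y)\,\mathrm{d}\theta$; with $U\sim\mathrm{uniform}[0,1]$, $r_{\phi,f}(x\mid\tilde\theta,y)=\Pr\big(C_{\phi,f}(f(\tilde\theta,y)\mid y)-U\,D_{\phi,f}(f(\tilde\theta,y)\mid y)\le x\big)$, $q_{\phi,f}(x\mid y)=\int_\Theta\pi_{\text{post}}(\tilde\theta\mid y)r_{\phi,f}(x\mid\tilde\theta,y)\,\mathrm{d}\tilde\theta$; $\phi$ passes continuous SBC w.r.t. $f$ if $\int_Yq_{\phi,f}(x\mid y)\pi_{\text{marg}}(y)\,\mathrm{d}y=x$ for all $x\in[0,1]$. *)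

theory Defs
  imports "HOL-Probability.Probability"
begin

(* Model: base measures Theta (for d theta) and Y (for d y),
   prior density  prior :: 'a => real,
   observation density obs y theta = pi_obs(y | theta),
   posterior family phi theta y = phi(theta | y),
   test quantity f theta y. *)

definition marg :: "'a measure \<Rightarrow> ('a \<Rightarrow> real) \<Rightarrow> ('b \<Rightarrow> 'a \<Rightarrow> real) \<Rightarrow> 'b \<Rightarrow> real" where
  "marg Th prior obs y = (\<integral>\<theta>. obs y \<theta> * prior \<theta> \<partial>Th)"

definition post :: "'a measure \<Rightarrow> ('a \<Rightarrow> real) \<Rightarrow> ('b \<Rightarrow> 'a \<Rightarrow> real) \<Rightarrow> 'a \<Rightarrow> 'b \<Rightarrow> real" where
  "post Th prior obs \<theta> y = obs y \<theta> * prior \<theta> / marg Th prior obs y"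

definition N_less :: "nat \<Rightarrow> ('a \<Rightarrow> 'b \<Rightarrow> real) \<Rightarrow> (nat \<Rightarrow> 'a) \<Rightarrow> 'a \<Rightarrow> 'b \<Rightarrow> nat" where
  "N_less M f \<theta>s \<theta>t y = card {m \<in> {..<M}. f (\<theta>s m) y < f \<theta>t y}"

definition N_equals :: "nat \<Rightarrow> ('a \<Rightarrow> 'b \<Rightarrow> real) \<Rightarrow> (nat \<Rightarrow> 'a) \<Rightarrow> 'a \<Rightarrow> 'b \<Rightarrow> nat" where
  "N_equals M f \<theta>s \<theta>t y = card {m \<in> {..<M}. f (\<theta>s m) y = f \<theta>t y}"

definition sample_measure :: "'a measure \<Rightarrow> ('a \<Rightarrow> 'b \<Rightarrow> real) \<Rightarrow> nat \<Rightarrow> 'b \<Rightarrow> (nat \<Rightarrow> 'a) measure" where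
  "sample_measure Th \<phi> M y = PiM {..<M} (\<lambda>_. density Th (\<lambda>\<theta>. ennreal (\<phi> \<theta> y)))"

definition R_SBC :: "'a measure \<Rightarrow> ('a \<Rightarrow> 'b \<Rightarrow> real) \<Rightarrow> ('a \<Rightarrow> 'b \<Rightarrow> real) \<Rightarrow> nat \<Rightarrow> nat \<Rightarrow> 'a \<Rightarrow> 'b \<Rightarrow> real" where
  "R_SBC Th \<phi> f M i \<theta>t y =
     (\<integral>\<theta>s. measure_pmf.prob (pmf_of_set {0..N_equals M f \<theta>s \<theta>t y})
                {k. N_less M f \<theta>s \<theta>t y + k \<le> i} \<partial>(sample_measure Th \<phi> M y))"

definition Q_SBC :: "'a measure \<Rightarrow> ('a \<Rightarrow> real) \<Rightarrow> ('b \<Rightarrow> 'a \<Rightarrow> real) \<Rightarrow> ('a \<Rightarrow> 'b \<Rightarrow> real) \<Rightarrow> ('a \<Rightarrow> 'b \<Rightarrow> real) \<Rightarrow> nat \<Rightarrow> nat \<Rightarrow> 'b \<Rightarrow> real" where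
  "Q_SBC Th prior obs \<phi> f M i y = (\<integral>\<theta>t. post Th prior obs \<theta>t y * R_SBC Th \<phi> f M i \<theta>t y \<partial>Th)"

definition passes_M_SBC :: "'a measure \<Rightarrow> 'b measure \<Rightarrow> ('a \<Rightarrow> real) \<Rightarrow> ('b \<Rightarrow> 'a \<Rightarrow> real) \<Rightarrow> ('a \<Rightarrow> 'b \<Rightarrow> real) \<Rightarrow> nat \<Rightarrow> ('a \<Rightarrow> 'b \<Rightarrow> real) \<Rightarrow> bool" where
  "passes_M_SBC Th Y prior obs \<phi> M f \<longleftrightarrow>
     (\<forall>i < M. (\<integral>y. Q_SBC Th prior obs \<phi> f M i y * marg Th prior obs y \<partial>Y) = (real i + 1) / (real M + 1))"

definition C_SBC :: "'a measure \<Rightarrow> ('a \<Rightarrow> 'b \<Rightarrow> real) \<Rightarrow> ('a \<Rightarrow> 'b \<Rightarrow> real) \<Rightarrow> real \<Rightarrow> 'b \<Rightarrow> real" where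
  "C_SBC Th \<phi> f s y = (\<integral>\<theta>. indicator {\<theta>. f \<theta> y \<le> s} \<theta> * \<phi> \<theta> y \<partial>Th)"

definition D_SBC :: "'a measure \<Rightarrow> ('a \<Rightarrow> 'b \<Rightarrow> real) \<Rightarrow> ('a \<Rightarrow> 'b \<Rightarrow> real) \<Rightarrow> real \<Rightarrow> 'b \<Rightarrow> real" where
  "D_SBC Th \<phi> f s y = (\<integral>\<theta>. indicator {\<theta>. f \<theta> y = s} \<theta> * \<phi> \<theta> y \<partial>Th)"

definition r_SBC :: "'a measure \<Rightarrow> ('a \<Rightarrow> 'b \<Rightarrow> real) \<Rightarrow> ('a \<Rightarrow> 'b \<Rightarrow> real) \<Rightarrow> real \<Rightarrow> 'a \<Rightarrow> 'b \<Rightarrow> real" where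
  "r_SBC Th \<phi> f x \<theta>t y =
     measure (uniform_measure lborel {0..1::real})
       {u. C_SBC Th \<phi> f (f \<theta>t y) y - u * D_SBC Th \<phi> f (f \<theta>t y) y \<le> x}"

definition q_SBC :: "'a measure \<Rightarrow> ('a \<Rightarrow> real) \<Rightarrow> ('b \<Rightarrow> 'a \<Rightarrow> real) \<Rightarrow> ('a \<Rightarrow> 'b \<Rightarrow> real) \<Rightarrow> ('a \<Rightarrow> 'b \<Rightarrow> real) \<Rightarrow> real \<Rightarrow> 'b \<Rightarrow> real" where
  "q_SBC Th prior obs \<phi> f x y = (\<integral>\<theta>t. post Th prior obs \<theta>t y * r_SBC Th \<phi> f x \<theta>t y \<partial>Th)"

definition passes_cont_SBC :: "'a measure \<Rightarrow> 'b measure \<Rightarrow> ('a \<Rightarrow> real) \<Rightarrow> ('b \<Rightarrow> 'a \<Rightarrow> real) \<Rightarrow> ('a \<Rightarrow> 'b \<Rightarrow> real) \<Rightarrow> ('a \<Rightarrow> 'b \<Rightarrow> real) \<Rightarrow> bool" where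
  "passes_cont_SBC Th Y prior obs \<phi> f \<longleftrightarrow>
     (\<forall>x \<in> {0..1}. (\<integral>y. q_SBC Th prior obs \<phi> f x y * marg Th prior obs y \<partial>Y) = x)"

end

theory Submission
  imports Defs
begin

abbreviation "UU \<equiv> uniform_measure lborel {0..1::real}"

lemma UU_measure: "B \<in> sets borel \<Longrightarrow> measure UU B = measure lborel ({0..1} \<inter> B)"
  by (subst measure_uniform_measure) (auto simp: emeasure_lborel_Icc_eq)

lemma rho_pos:
  fixes a b x :: real assumes b: "b > 0"
  shows "measure UU {u. a - u*b \<le> x} = min 1 (max 0 (1 - (a-x)/b))"
proof -
  have "{0..1} \<inter> {u. a - u*b \<le> x} = {max 0 ((a-x)/b)..1}"
    using b by (auto simp: field_simps)
  moreover have "{u. a - u*b \<le> x} \<in> sets borel" by measurable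
  ultimately show ?thesis
    by (simp add: UU_measure) (auto simp: min_def max_def)
qed

lemma rhos_pos:
  fixes a b x :: real assumes b: "b > 0"
  shows "measure UU {u. a - u*b < x} = min 1 (max 0 (1 - (a-x)/b))"
proof -
  have "{0..1} \<inter> {u. a - u*b < x} = (if (a-x)/b < 0 then {0..1} else {(a-x)/b<..1})"
    using b by (auto simp: field_simps; smt (verit) mult_nonneg_nonneg mult_le_0_iff)
  moreover have "{u. a - u*b < x} \<in> sets borel" by measurable
  ultimately show ?thesis
    by (simp add: UU_measure) (auto simp: min_def max_def)
qed

lemma rho_zero: "measure UU {u. a - u*0 \<le> (x::real)} = (if a \<le> x then 1 else 0)"
  by (simp add: UU_measure)
lemma rhos_zero: "measure UU {u. a - u*0 < (x::real)} = (if a < x then 1 else 0)"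
  by (simp add: UU_measure)

lemma rho_refl:
  fixes a b x :: real assumes b: "b \<ge> 0"
  shows "measure UU {u. (1 - a + b) - u*b \<le> x} = 1 - measure UU {u. a - u*b < 1 - x}"
proof (cases "b = 0")
  case True then show ?thesis by (simp add: UU_measure)
next
  case False
  then have b: "b > 0" using b by simp
  have e: "1 - (1 - a + b - x) / b = - (1 - (a - (1 - x)) / b) + 1"
    using b by (simp add: field_simps)
  show ?thesis unfolding rho_pos[OF b] rhos_pos[OF b] e
    by (auto simp: min_def max_def)
qed

lemma meas_comp2:
  assumes "(\<lambda>(\<theta>, y). G \<theta> y) \<in> borel_measurable (A \<Otimes>\<^sub>M B)"
    "a \<in> measurable M A" "b \<in> measurable M B"
  shows "(\<lambda>x. G (a x) (b x)) \<in> borel_measurable M"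
  using measurable_compose[OF measurable_Pair[OF assms(2,3)] assms(1)] by simp

locale sbc =
  fixes Th :: "'a measure" and Y :: "'b measure"
    and prior :: "'a \<Rightarrow> real" and obs :: "'b \<Rightarrow> 'a \<Rightarrow> real"
    and \<phi> :: "'a \<Rightarrow> 'b \<Rightarrow> real"
  assumes sfTh: "sigma_finite_measure Th" and sfY: "sigma_finite_measure Y"
    and prior_meas: "prior \<in> borel_measurable Th"
    and prior_nonneg: "\<forall>\<theta>\<in>space Th. prior \<theta> \<ge> 0"
    and prior_norm: "(\<integral>\<theta>. prior \<theta> \<partial>Th) = 1"
    and obs_meas: "(\<lambda>(y, \<theta>). obs y \<theta>) \<in> borel_measurable (Y \<Otimes>\<^sub>M Th)"
    and obs_nonneg: "\<forall>y\<in>space Y. \<forall>\<theta>\<in>space Th. obs y \<theta> \<ge> 0"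
    and obs_norm: "\<forall>\<theta>\<in>space Th. (\<integral>y. obs y \<theta> \<partial>Y) = 1"
    and phi_meas: "(\<lambda>(\<theta>, y). \<phi> \<theta> y) \<in> borel_measurable (Th \<Otimes>\<^sub>M Y)"
    and phi_nonneg: "\<forall>y\<in>space Y. \<forall>\<theta>\<in>space Th. \<phi> \<theta> y \<ge> 0"
    and phi_norm: "\<forall>y\<in>space Y. (\<integral>\<theta>. \<phi> \<theta> y \<partial>Th) = 1"
begin

sublocale T: sigma_finite_measure Th by (rule sfTh)
sublocale YY: sigma_finite_measure Y by (rule sfY)
sublocale P: pair_sigma_finite Y Th ..

lemmas obs_m[measurable (raw)] = meas_comp2[OF obs_meas]
lemmas phi_m[measurable (raw)] = meas_comp2[OF phi_meas]
lemmas prior_m[measurable] = prior_meas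

definition "mg y = marg Th prior obs y"
definition "pst \<theta> y = post Th prior obs \<theta> y"

lemma mg_meas[measurable]: "mg \<in> borel_measurable Y"
  unfolding mg_def marg_def by measurable

lemma pst_meas[measurable (raw)]:
  assumes [measurable]: "a \<in> measurable M Th" "b \<in> measurable M Y"
  shows "(\<lambda>x. pst (a x) (b x)) \<in> borel_measurable M"
  unfolding pst_def post_def mg_def[symmetric] by measurable

lemma mg_nonneg: "y \<in> space Y \<Longrightarrow> mg y \<ge> 0"
  unfolding mg_def marg_def using obs_nonneg prior_nonneg
  by (auto intro!: integral_nonneg)

lemma pst_nonneg: "y \<in> space Y \<Longrightarrow> \<theta> \<in> space Th \<Longrightarrow> pst \<theta> y \<ge> 0"
  unfolding pst_def post_def mg_def[symmetric] using obs_nonneg prior_nonneg mg_nonneg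
  by auto

lemma prior_int: "integrable Th prior"
  using prior_norm not_integrable_integral_eq by fastforce

lemma obs_int: "\<theta> \<in> space Th \<Longrightarrow> integrable Y (\<lambda>y. obs y \<theta>)"
  using obs_norm not_integrable_integral_eq by fastforce

lemma phi_int: "y \<in> space Y \<Longrightarrow> integrable Th (\<lambda>\<theta>. \<phi> \<theta> y)"
  using phi_norm not_integrable_integral_eq by fastforce

lemma joint_int: "integrable (Y \<Otimes>\<^sub>M Th) (\<lambda>(y, \<theta>). obs y \<theta> * prior \<theta>)"
proof (rule integrableI_nonneg)
  show "(\<lambda>(y, \<theta>). obs y \<theta> * prior \<theta>) \<in> borel_measurable (Y \<Otimes>\<^sub>M Th)" by measurable
  show "AE x in Y \<Otimes>\<^sub>M Th. 0 \<le> (case x of (y, \<theta>) \<Rightarrow> obs y \<theta> * prior \<theta>)"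
    using obs_nonneg prior_nonneg by (auto simp: space_pair_measure)
  have "(\<integral>\<^sup>+ x. ennreal (case x of (y, \<theta>) \<Rightarrow> obs y \<theta> * prior \<theta>) \<partial>(Y \<Otimes>\<^sub>M Th))
      = (\<integral>\<^sup>+ \<theta>. (\<integral>\<^sup>+ y. ennreal (obs y \<theta> * prior \<theta>) \<partial>Y) \<partial>Th)"
    by (subst P.nn_integral_snd[symmetric]) (auto)
  also have "\<dots> = (\<integral>\<^sup>+ \<theta>. ennreal (prior \<theta>) \<partial>Th)"
  proof (rule nn_integral_cong)
    fix \<theta> assume th: "\<theta> \<in> space Th"
    have "(\<integral>\<^sup>+ y. ennreal (obs y \<theta> * prior \<theta>) \<partial>Y) = (\<integral>\<^sup>+ y. ennreal (prior \<theta>) * ennreal (obs y \<theta>) \<partial>Y)"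
      using th prior_nonneg by (intro nn_integral_cong) (auto simp: ennreal_mult' mult.commute)
    also have "\<dots> = ennreal (prior \<theta>) * (\<integral>\<^sup>+ y. ennreal (obs y \<theta>) \<partial>Y)"
      using th by (intro nn_integral_cmult) measurable
    also have "(\<integral>\<^sup>+ y. ennreal (obs y \<theta>) \<partial>Y) = 1"
      using th obs_int[OF th] obs_nonneg obs_norm by (subst nn_integral_eq_integral) auto
    finally show "(\<integral>\<^sup>+ y. ennreal (obs y \<theta> * prior \<theta>) \<partial>Y) = ennreal (prior \<theta>)" by simp
  qed
  also have "\<dots> = 1"
    using prior_int prior_nonneg prior_norm by (subst nn_integral_eq_integral) auto
  finally show "(\<integral>\<^sup>+ x. ennreal (case x of (y, \<theta>) \<Rightarrow> obs y \<theta> * prior \<theta>) \<partial>(Y \<Otimes>\<^sub>M Th)) < \<infinity>"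
    by simp
qed

lemma mg_int: "integrable Y mg"
  unfolding mg_def marg_def using P.integrable_fst[OF joint_int] by simp

lemma mg_norm: "(\<integral>y. mg y \<partial>Y) = 1"
proof -
  have "(\<integral>y. mg y \<partial>Y) = (\<integral>\<theta>. (\<integral>y. obs y \<theta> * prior \<theta> \<partial>Y) \<partial>Th)"
    unfolding mg_def marg_def using P.Fubini_integral[OF joint_int] by simp
  also have "\<dots> = (\<integral>\<theta>. prior \<theta> \<partial>Th)"
    using obs_norm by (intro Bochner_Integration.integral_cong) (auto simp: integral_mult_left_zero)
  finally show ?thesis using prior_norm by simp
qed

lemma pst_int: "y \<in> space Y \<Longrightarrow> integrable Th (\<lambda>\<theta>. pst \<theta> y)"
proof (cases "mg y = 0")
  case True then show ?thesis unfolding pst_def post_def mg_def[symmetric] by simp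
next
  case False
  then have "integrable Th (\<lambda>\<theta>. obs y \<theta> * prior \<theta>)"
    unfolding mg_def marg_def using not_integrable_integral_eq by fastforce
  then show ?thesis unfolding pst_def post_def mg_def[symmetric] by simp
qed

lemma pst_norm: "mg y \<noteq> 0 \<Longrightarrow> (\<integral>\<theta>. pst \<theta> y \<partial>Th) = 1"
  unfolding pst_def post_def mg_def[symmetric]
  by (simp add: mg_def marg_def)

lemma pst_zero: "mg y = 0 \<Longrightarrow> pst \<theta> y = 0"
  unfolding pst_def post_def mg_def[symmetric] by simp

end

definition kle :: "real \<Rightarrow> real \<Rightarrow> real \<Rightarrow> real" where
  "kle x a b = (if b \<le> 0 then (if a \<le> x then 1 else 0) else min 1 (max 0 (1 - (a-x)/b)))"
definition klt :: "real \<Rightarrow> real \<Rightarrow> real \<Rightarrow> real" where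
  "klt x a b = (if b \<le> 0 then (if a < x then 1 else 0) else min 1 (max 0 (1 - (a-x)/b)))"

lemma kle_meas: "(\<lambda>(a, b). kle x a b) \<in> borel_measurable (borel \<Otimes>\<^sub>M borel)"
  unfolding kle_def by measurable
lemma klt_meas: "(\<lambda>(a, b). klt x a b) \<in> borel_measurable (borel \<Otimes>\<^sub>M borel)"
  unfolding klt_def by measurable

lemma kle_eq: "b \<ge> 0 \<Longrightarrow> measure UU {u. a - u*b \<le> x} = kle x a b"
  unfolding kle_def using rho_pos[of b a x] rho_zero[of a x] by (cases "b = 0") auto

lemma kle_refl: "b \<ge> 0 \<Longrightarrow> kle x (1 - a + b) b = 1 - klt (1 - x) a b"
  using rho_refl[of b a x] rho_pos[of b] rhos_pos[of b] rho_zero rhos_zero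
  unfolding kle_def klt_def by (cases "b = 0") auto

lemma kle_range: "0 \<le> kle x a b \<and> kle x a b \<le> 1"
  unfolding kle_def by auto
lemma klt_range: "0 \<le> klt x a b \<and> klt x a b \<le> 1"
  unfolding klt_def by auto

lemma klt_le_kle: "klt t a b \<le> kle t a b"
  unfolding kle_def klt_def by auto

lemma kle_le_klt: "s < t \<Longrightarrow> kle s a b \<le> klt t a b"
proof -
  assume st: "s < t"
  show ?thesis
  proof (cases "b \<le> 0")
    case True then show ?thesis using st unfolding kle_def klt_def by auto
  next
    case False
    then have "1 - (a - s)/b \<le> 1 - (a - t)/b" using st by (simp add: divide_right_mono)
    then show ?thesis using False unfolding kle_def klt_def by (auto intro!: min.mono max.mono)
  qed
qed

lemma klt_zero: "0 \<le> b \<Longrightarrow> b \<le> a \<Longrightarrow> klt 0 a b = 0"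
  unfolding klt_def by (auto simp: min_def max_def field_simps)

context sbc
begin

lemma C_meas:
  assumes Fm: "(\<lambda>(\<theta>, y). F \<theta> y) \<in> borel_measurable (Th \<Otimes>\<^sub>M Y)"
    and [measurable]: "s \<in> borel_measurable M" "b \<in> measurable M Y"
  shows "(\<lambda>x. C_SBC Th \<phi> F (s x) (b x)) \<in> borel_measurable M"
proof -
  note meas_comp2[OF Fm, measurable (raw)]
  show ?thesis unfolding C_SBC_def indicator_def by measurable
qed

lemma D_meas:
  assumes Fm: "(\<lambda>(\<theta>, y). F \<theta> y) \<in> borel_measurable (Th \<Otimes>\<^sub>M Y)"
    and [measurable]: "s \<in> borel_measurable M" "b \<in> measurable M Y"
  shows "(\<lambda>x. D_SBC Th \<phi> F (s x) (b x)) \<in> borel_measurable M"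
proof -
  note meas_comp2[OF Fm, measurable (raw)]
  show ?thesis unfolding D_SBC_def indicator_def by measurable
qed

lemma ind_int:
  assumes y: "y \<in> space Y" and m: "(\<lambda>\<theta>. indicator A \<theta> * \<phi> \<theta> y) \<in> borel_measurable Th"
  shows "integrable Th (\<lambda>\<theta>. indicator A \<theta> * \<phi> \<theta> y)"
  by (rule Bochner_Integration.integrable_bound[OF phi_int[OF y] m]) (auto simp: indicator_def intro!: AE_I2)

definition Cs where "Cs F s y = (\<integral>\<theta>. indicator {\<theta>. F \<theta> y < s} \<theta> * \<phi> \<theta> y \<partial>Th)"

context
  fixes F :: "'a \<Rightarrow> 'b \<Rightarrow> real"
  assumes Fm: "(\<lambda>(\<theta>, y). F \<theta> y) \<in> borel_measurable (Th \<Otimes>\<^sub>M Y)"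
begin

lemma Fm1[measurable]: "y \<in> space Y \<Longrightarrow> (\<lambda>\<theta>. F \<theta> y) \<in> borel_measurable Th"
  using meas_comp2[OF Fm measurable_ident_sets[OF refl] measurable_const[of y Y Th]] by simp

lemma phim1[measurable]: "y \<in> space Y \<Longrightarrow> (\<lambda>\<theta>. \<phi> \<theta> y) \<in> borel_measurable Th"
  using meas_comp2[OF phi_meas measurable_ident_sets[OF refl] measurable_const[of y Y Th]] by simp

lemma C_split: "y \<in> space Y \<Longrightarrow> C_SBC Th \<phi> F s y = Cs F s y + D_SBC Th \<phi> F s y"
proof -
  assume y[measurable]: "y \<in> space Y"
  have i1: "integrable Th (\<lambda>\<theta>. indicator {\<theta>. F \<theta> y < s} \<theta> * \<phi> \<theta> y)"
    by (rule ind_int[OF y]) (simp add: indicator_def)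
  have i2: "integrable Th (\<lambda>\<theta>. indicator {\<theta>. F \<theta> y = s} \<theta> * \<phi> \<theta> y)"
    by (rule ind_int[OF y]) (simp add: indicator_def)
  have "C_SBC Th \<phi> F s y = (\<integral>\<theta>. indicator {\<theta>. F \<theta> y < s} \<theta> * \<phi> \<theta> y + indicator {\<theta>. F \<theta> y = s} \<theta> * \<phi> \<theta> y \<partial>Th)"
    unfolding C_SBC_def by (intro Bochner_Integration.integral_cong) (auto simp: indicator_def)
  also have "\<dots> = Cs F s y + D_SBC Th \<phi> F s y"
    unfolding Cs_def D_SBC_def by (rule Bochner_Integration.integral_add[OF i1 i2])
  finally show ?thesis .
qed

lemma ind_lt_int: "y \<in> space Y \<Longrightarrow> integrable Th (\<lambda>\<theta>. indicator {\<theta>. F \<theta> y < c} \<theta> * \<phi> \<theta> y)"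
proof -
  assume y[measurable]: "y \<in> space Y"
  show ?thesis by (rule ind_int[OF y]) (simp add: indicator_def)
qed

lemma Cs_nonneg: "y \<in> space Y \<Longrightarrow> Cs F s y \<ge> 0"
  unfolding Cs_def using phi_nonneg by (auto intro!: integral_nonneg)
lemma D_nonneg: "y \<in> space Y \<Longrightarrow> D_SBC Th \<phi> F s y \<ge> 0"
  unfolding D_SBC_def using phi_nonneg by (auto intro!: integral_nonneg)

lemma r_kle: "y \<in> space Y \<Longrightarrow> r_SBC Th \<phi> F x \<theta>t y = kle x (C_SBC Th \<phi> F (F \<theta>t y) y) (D_SBC Th \<phi> F (F \<theta>t y) y)"
  unfolding r_SBC_def using kle_eq D_nonneg by auto

definition qk where
  "qk k y = (\<integral>\<theta>t. pst \<theta>t y * k (C_SBC Th \<phi> F (F \<theta>t y) y) (D_SBC Th \<phi> F (F \<theta>t y) y) \<partial>Th)"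

context
  fixes k :: "real \<Rightarrow> real \<Rightarrow> real"
  assumes km: "(\<lambda>(a, b). k a b) \<in> borel_measurable (borel \<Otimes>\<^sub>M borel)"
    and kr: "\<And>a b. 0 \<le> k a b \<and> k a b \<le> 1"
begin

lemma km'[measurable (raw)]:
  assumes "a \<in> borel_measurable M" "b \<in> borel_measurable M"
  shows "(\<lambda>x. k (a x) (b x)) \<in> borel_measurable M"
  by (rule meas_comp2[OF km assms])

lemma Cm'[measurable (raw)]:
  assumes "s \<in> borel_measurable M" "b \<in> measurable M Y"
  shows "(\<lambda>x. C_SBC Th \<phi> F (s x) (b x)) \<in> borel_measurable M"
  by (rule C_meas[OF Fm assms])
lemma Dm'[measurable (raw)]:
  assumes "s \<in> borel_measurable M" "b \<in> measurable M Y"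
  shows "(\<lambda>x. D_SBC Th \<phi> F (s x) (b x)) \<in> borel_measurable M"
  by (rule D_meas[OF Fm assms])
lemma Fm'[measurable (raw)]:
  assumes "a \<in> measurable M Th" "b \<in> measurable M Y"
  shows "(\<lambda>x. F (a x) (b x)) \<in> borel_measurable M"
  by (rule meas_comp2[OF Fm assms])

lemma qk_integrand_int: "y \<in> space Y \<Longrightarrow>
   integrable Th (\<lambda>\<theta>t. pst \<theta>t y * k (C_SBC Th \<phi> F (F \<theta>t y) y) (D_SBC Th \<phi> F (F \<theta>t y) y))"
proof -
  assume y[measurable]: "y \<in> space Y"
  show ?thesis
  proof (rule Bochner_Integration.integrable_bound[OF pst_int[OF y]])
    show "(\<lambda>\<theta>t. pst \<theta>t y * k (C_SBC Th \<phi> F (F \<theta>t y) y) (D_SBC Th \<phi> F (F \<theta>t y) y)) \<in> borel_measurable Th"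
      by measurable
    show "AE x in Th. norm (pst x y * k (C_SBC Th \<phi> F (F x y) y) (D_SBC Th \<phi> F (F x y) y)) \<le> norm (pst x y)"
      using kr pst_nonneg[OF y] by (intro AE_I2) (auto simp: abs_mult intro!: mult_left_le)
  qed
qed

lemma qk_meas[measurable]: "qk k \<in> borel_measurable Y"
  unfolding qk_def by measurable

lemma qk_bound: "y \<in> space Y \<Longrightarrow> mg y \<noteq> 0 \<Longrightarrow> 0 \<le> qk k y \<and> qk k y \<le> 1"
proof -
  assume y: "y \<in> space Y" and m: "mg y \<noteq> 0"
  have "0 \<le> qk k y" unfolding qk_def using kr pst_nonneg[OF y] by (auto intro!: integral_nonneg)
  moreover have "qk k y \<le> (\<integral>\<theta>t. pst \<theta>t y \<partial>Th)"
    unfolding qk_def using kr pst_nonneg[OF y]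
    by (intro Bochner_Integration.integral_mono qk_integrand_int[OF y] pst_int[OF y]) (auto intro!: mult_left_le)
  ultimately show ?thesis using pst_norm[OF m] by simp
qed

lemma QQ_int: "integrable Y (\<lambda>y. qk k y * mg y)"
proof (rule Bochner_Integration.integrable_bound[OF mg_int])
  show "(\<lambda>y. qk k y * mg y) \<in> borel_measurable Y" by measurable
  show "AE x in Y. norm (qk k x * mg x) \<le> norm (mg x)"
  proof (intro AE_I2)
    fix y assume y: "y \<in> space Y"
    show "norm (qk k y * mg y) \<le> norm (mg y)"
    proof (cases "mg y = 0")
      case True then show ?thesis by simp
    next
      case False then show ?thesis using qk_bound[OF y False] mg_nonneg[OF y]
        by (auto simp: abs_mult intro!: mult_left_le_one_le)
    qed
  qed
qed

end

lemma qk_mono: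
  assumes km1: "(\<lambda>(a, b). k1 a b) \<in> borel_measurable (borel \<Otimes>\<^sub>M borel)"
    and kr1: "\<And>a b. 0 \<le> k1 a b \<and> k1 a b \<le> 1"
    and km2: "(\<lambda>(a, b). k2 a b) \<in> borel_measurable (borel \<Otimes>\<^sub>M borel)"
    and kr2: "\<And>a b. 0 \<le> k2 a b \<and> k2 a b \<le> 1"
    and le: "\<And>a b. k1 a b \<le> k2 a b" and y: "y \<in> space Y"
  shows "qk k1 y * mg y \<le> qk k2 y * mg y"
proof -
  have "qk k1 y \<le> qk k2 y"
    unfolding qk_def using le pst_nonneg[OF y]
    by (intro Bochner_Integration.integral_mono qk_integrand_int[OF km1 kr1 y] qk_integrand_int[OF km2 kr2 y])
       (auto intro!: mult_left_mono)
  then show ?thesis using mg_nonneg[OF y] by (simp add: mult_right_mono)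
qed

lemma q_eq_qk: "y \<in> space Y \<Longrightarrow> q_SBC Th prior obs \<phi> F x y = qk (kle x) y"
  unfolding q_SBC_def qk_def pst_def using r_kle by (intro Bochner_Integration.integral_cong) auto

lemma passes_cont_iff: "passes_cont_SBC Th Y prior obs \<phi> F \<longleftrightarrow> (\<forall>x\<in>{0..1}. (\<integral>y. qk (kle x) y * mg y \<partial>Y) = x)"
proof -
  have "\<And>x. (\<integral>y. q_SBC Th prior obs \<phi> F x y * marg Th prior obs y \<partial>Y) = (\<integral>y. qk (kle x) y * mg y \<partial>Y)"
    using q_eq_qk by (intro Bochner_Integration.integral_cong) (auto simp: mg_def)
  then show ?thesis unfolding passes_cont_SBC_def by simp
qed

end

declare Fm1[measurable del] phim1[measurable del] km'[measurable del] Cm'[measurable del]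
  Dm'[measurable del] Fm'[measurable del] qk_meas[measurable del]

end

context sbc begin

lemma sandwich:
  assumes Gm: "(\<lambda>(\<theta>, y). G \<theta> y) \<in> borel_measurable (Th \<Otimes>\<^sub>M Y)"
    and pg: "\<forall>x\<in>{0..1}. (\<integral>y. qk G (kle x) y * mg y \<partial>Y) = x"
    and t: "0 \<le> t" "t \<le> 1"
  shows "(\<integral>y. qk G (klt t) y * mg y \<partial>Y) = t"
proof (cases "t = 0")
  case True
  have "(\<integral>y. qk G (klt t) y * mg y \<partial>Y) = (\<integral>y. 0 \<partial>Y)"
  proof (intro Bochner_Integration.integral_cong refl)
    fix y assume y: "y \<in> space Y"
    have "qk G (klt 0) y = (\<integral>\<theta>t. 0 \<partial>Th)"
      unfolding qk_def[OF Gm]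
    proof (intro Bochner_Integration.integral_cong refl)
      fix \<theta>t assume "\<theta>t \<in> space Th"
      show "pst \<theta>t y * klt 0 (C_SBC Th \<phi> G (G \<theta>t y) y) (D_SBC Th \<phi> G (G \<theta>t y) y) = 0"
        using klt_zero[OF D_nonneg[OF Gm y]] C_split[OF Gm y] Cs_nonneg[OF Gm y] by simp
    qed
    then show "qk G (klt t) y * mg y = 0" using True by simp
  qed
  then show ?thesis using True by simp
next
  case False
  then have t0: "0 < t" using t by simp
  have kltm: "(\<lambda>(a, b). klt t a b) \<in> borel_measurable (borel \<Otimes>\<^sub>M borel)" by (rule klt_meas)
  have up: "(\<integral>y. qk G (klt t) y * mg y \<partial>Y) \<le> t"
  proof -
    have "(\<integral>y. qk G (klt t) y * mg y \<partial>Y) \<le> (\<integral>y. qk G (kle t) y * mg y \<partial>Y)"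
      by (rule Bochner_Integration.integral_mono[OF QQ_int[OF Gm klt_meas klt_range] QQ_int[OF Gm kle_meas kle_range]])
         (rule qk_mono[OF Gm klt_meas klt_range kle_meas kle_range klt_le_kle])
    then show ?thesis using pg t by simp
  qed
  have lo: "s \<le> (\<integral>y. qk G (klt t) y * mg y \<partial>Y)" if s: "0 \<le> s" "s < t" for s
  proof -
    have "(\<integral>y. qk G (kle s) y * mg y \<partial>Y) \<le> (\<integral>y. qk G (klt t) y * mg y \<partial>Y)"
      by (rule Bochner_Integration.integral_mono[OF QQ_int[OF Gm kle_meas kle_range] QQ_int[OF Gm klt_meas klt_range]])
         (rule qk_mono[OF Gm kle_meas kle_range klt_meas klt_range kle_le_klt[OF s(2)]])
    then show ?thesis using pg s t by simp
  qed
  have nn: "0 \<le> (\<integral>y. qk G (klt t) y * mg y \<partial>Y)"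
    using lo[of 0] t0 by simp
  show ?thesis
  proof (rule ccontr)
    let ?I = "(\<integral>y. qk G (klt t) y * mg y \<partial>Y)"
    assume "?I \<noteq> t"
    then have "?I < t" using up by simp
    then have "(?I + t)/2 \<le> ?I" using lo[of "(?I + t)/2"] nn by simp
    then show False using \<open>?I < t\<close> by simp
  qed
qed

lemma cont_dec:
  assumes Fm: "(\<lambda>(\<theta>, y). F \<theta> y) \<in> borel_measurable (Th \<Otimes>\<^sub>M Y)"
    and Gm: "(\<lambda>(\<theta>, y). G \<theta> y) \<in> borel_measurable (Th \<Otimes>\<^sub>M Y)"
    and rev: "\<forall>y\<in>space Y. \<forall>\<theta>\<in>space Th. \<forall>\<theta>'\<in>space Th. (F \<theta> y \<le> F \<theta>' y) = (G \<theta>' y \<le> G \<theta> y)"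
    and pG: "passes_cont_SBC Th Y prior obs \<phi> G"
  shows "passes_cont_SBC Th Y prior obs \<phi> F"
proof -
  have pg: "\<forall>x\<in>{0..1}. (\<integral>y. qk G (kle x) y * mg y \<partial>Y) = x"
    using pG passes_cont_iff[OF Gm] by simp
  have CF: "C_SBC Th \<phi> F (F \<theta>t y) y = 1 - C_SBC Th \<phi> G (G \<theta>t y) y + D_SBC Th \<phi> G (G \<theta>t y) y"
    if y: "y \<in> space Y" and th: "\<theta>t \<in> space Th" for y \<theta>t
  proof -
    have i1: "integrable Th (\<lambda>\<theta>. indicator {\<theta>. G \<theta> y < G \<theta>t y} \<theta> * \<phi> \<theta> y)"
      by (rule ind_lt_int[OF Gm y])
    have "C_SBC Th \<phi> F (F \<theta>t y) y = (\<integral>\<theta>. \<phi> \<theta> y - indicator {\<theta>. G \<theta> y < G \<theta>t y} \<theta> * \<phi> \<theta> y \<partial>Th)"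
      unfolding C_SBC_def
    proof (intro Bochner_Integration.integral_cong refl)
      fix \<theta> assume th2: "\<theta> \<in> space Th"
      have "(F \<theta> y \<le> F \<theta>t y) = (G \<theta>t y \<le> G \<theta> y)" using rev y th th2 by blast
      then have "(F \<theta> y \<le> F \<theta>t y) = (\<not> G \<theta> y < G \<theta>t y)" by linarith
      then show "indicator {\<theta>. F \<theta> y \<le> F \<theta>t y} \<theta> * \<phi> \<theta> y = \<phi> \<theta> y - indicator {\<theta>. G \<theta> y < G \<theta>t y} \<theta> * \<phi> \<theta> y"
        by (simp add: indicator_def)
    qed
    also have "\<dots> = 1 - Cs G (G \<theta>t y) y"
      unfolding Cs_def using Bochner_Integration.integral_diff[OF phi_int[OF y] i1] phi_norm y by simp
    finally show ?thesis using C_split[OF Gm y] by simp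
  qed
  have DF: "D_SBC Th \<phi> F (F \<theta>t y) y = D_SBC Th \<phi> G (G \<theta>t y) y"
    if y: "y \<in> space Y" and th: "\<theta>t \<in> space Th" for y \<theta>t
    unfolding D_SBC_def
  proof (intro Bochner_Integration.integral_cong refl)
    fix \<theta> assume "\<theta> \<in> space Th"
    then have "(F \<theta> y \<le> F \<theta>t y) = (G \<theta>t y \<le> G \<theta> y)" "(F \<theta>t y \<le> F \<theta> y) = (G \<theta> y \<le> G \<theta>t y)"
      using rev y th by blast+
    then have "(F \<theta> y = F \<theta>t y) = (G \<theta> y = G \<theta>t y)" by linarith
    then show "indicator {\<theta>. F \<theta> y = F \<theta>t y} \<theta> * \<phi> \<theta> y = indicator {\<theta>. G \<theta> y = G \<theta>t y} \<theta> * \<phi> \<theta> y"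
      by (simp add: indicator_def)
  qed
  have QF: "qk F (kle x) y * mg y = mg y - qk G (klt (1 - x)) y * mg y" if y: "y \<in> space Y" for x y
  proof -
    have "qk F (kle x) y = (\<integral>\<theta>t. pst \<theta>t y - pst \<theta>t y * klt (1 - x) (C_SBC Th \<phi> G (G \<theta>t y) y) (D_SBC Th \<phi> G (G \<theta>t y) y) \<partial>Th)"
      unfolding qk_def[OF Fm]
    proof (intro Bochner_Integration.integral_cong refl)
      fix \<theta>t assume th: "\<theta>t \<in> space Th"
      show "pst \<theta>t y * kle x (C_SBC Th \<phi> F (F \<theta>t y) y) (D_SBC Th \<phi> F (F \<theta>t y) y) =
          pst \<theta>t y - pst \<theta>t y * klt (1 - x) (C_SBC Th \<phi> G (G \<theta>t y) y) (D_SBC Th \<phi> G (G \<theta>t y) y)"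
        unfolding CF[OF y th] DF[OF y th] kle_refl[OF D_nonneg[OF Gm y]] by (simp add: right_diff_distrib)
    qed
    also have "\<dots> = (\<integral>\<theta>t. pst \<theta>t y \<partial>Th) - qk G (klt (1 - x)) y"
      unfolding qk_def[OF Gm]
      by (rule Bochner_Integration.integral_diff[OF pst_int[OF y] qk_integrand_int[OF Gm klt_meas klt_range y]])
    finally have e: "qk F (kle x) y = (\<integral>\<theta>t. pst \<theta>t y \<partial>Th) - qk G (klt (1 - x)) y" .
    show ?thesis
    proof (cases "mg y = 0")
      case True then show ?thesis by simp
    next
      case False
      then have "qk F (kle x) y = 1 - qk G (klt (1 - x)) y" using e pst_norm[OF False] by simp
      then show ?thesis by (simp add: left_diff_distrib)
    qed
  qed
  have "(\<integral>y. qk F (kle x) y * mg y \<partial>Y) = x" if x: "x \<in> {0..1}" for x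
  proof -
    have "(\<integral>y. qk F (kle x) y * mg y \<partial>Y) = (\<integral>y. mg y - qk G (klt (1 - x)) y * mg y \<partial>Y)"
      using QF by (intro Bochner_Integration.integral_cong) auto
    also have "\<dots> = (\<integral>y. mg y \<partial>Y) - (\<integral>y. qk G (klt (1 - x)) y * mg y \<partial>Y)"
      by (rule Bochner_Integration.integral_diff[OF mg_int QQ_int[OF Gm klt_meas klt_range]])
    also have "\<dots> = x" using mg_norm sandwich[OF Gm pg, of "1 - x"] x by simp
    finally show ?thesis .
  qed
  then show ?thesis using passes_cont_iff[OF Fm] by simp
qed

lemma cont_inc:
  assumes Fm: "(\<lambda>(\<theta>, y). F \<theta> y) \<in> borel_measurable (Th \<Otimes>\<^sub>M Y)"
    and Gm: "(\<lambda>(\<theta>, y). G \<theta> y) \<in> borel_measurable (Th \<Otimes>\<^sub>M Y)"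
    and same: "\<forall>y\<in>space Y. \<forall>\<theta>\<in>space Th. \<forall>\<theta>'\<in>space Th. (F \<theta> y \<le> F \<theta>' y) = (G \<theta> y \<le> G \<theta>' y)"
  shows "passes_cont_SBC Th Y prior obs \<phi> F = passes_cont_SBC Th Y prior obs \<phi> G"
proof -
  have CF: "C_SBC Th \<phi> F (F \<theta>t y) y = C_SBC Th \<phi> G (G \<theta>t y) y"
    if y: "y \<in> space Y" and th: "\<theta>t \<in> space Th" for y \<theta>t
    unfolding C_SBC_def
  proof (intro Bochner_Integration.integral_cong refl)
    fix \<theta> assume "\<theta> \<in> space Th"
    then have "(F \<theta> y \<le> F \<theta>t y) = (G \<theta> y \<le> G \<theta>t y)" using same y th by blast
    then show "indicator {\<theta>. F \<theta> y \<le> F \<theta>t y} \<theta> * \<phi> \<theta> y = indicator {\<theta>. G \<theta> y \<le> G \<theta>t y} \<theta> * \<phi> \<theta> y"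
      by (simp add: indicator_def)
  qed
  have DF: "D_SBC Th \<phi> F (F \<theta>t y) y = D_SBC Th \<phi> G (G \<theta>t y) y"
    if y: "y \<in> space Y" and th: "\<theta>t \<in> space Th" for y \<theta>t
    unfolding D_SBC_def
  proof (intro Bochner_Integration.integral_cong refl)
    fix \<theta> assume "\<theta> \<in> space Th"
    then have "(F \<theta> y \<le> F \<theta>t y) = (G \<theta> y \<le> G \<theta>t y)" "(F \<theta>t y \<le> F \<theta> y) = (G \<theta>t y \<le> G \<theta> y)"
      using same y th by blast+
    then have "(F \<theta> y = F \<theta>t y) = (G \<theta> y = G \<theta>t y)" by linarith
    then show "indicator {\<theta>. F \<theta> y = F \<theta>t y} \<theta> * \<phi> \<theta> y = indicator {\<theta>. G \<theta> y = G \<theta>t y} \<theta> * \<phi> \<theta> y"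
      by (simp add: indicator_def)
  qed
  have "qk F (kle x) y = qk G (kle x) y" if "y \<in> space Y" for x y
    unfolding qk_def[OF Fm] qk_def[OF Gm] using CF DF that by (intro Bochner_Integration.integral_cong refl) simp
  then have "(\<integral>y. qk F (kle x) y * mg y \<partial>Y) = (\<integral>y. qk G (kle x) y * mg y \<partial>Y)" for x
    by (intro Bochner_Integration.integral_cong refl) auto
  then show ?thesis using passes_cont_iff[OF Fm] passes_cont_iff[OF Gm] by simp
qed

end

lemma cnt_formula: "card ({0..E} \<inter> {k. L + k \<le> (i::nat)}) = (if L \<le> i then min E (i - L) + 1 else 0)"
proof (cases "L \<le> i")
  case True
  then have "{0..E} \<inter> {k. L + k \<le> i} = {0..min E (i - L)}" by auto
  then show ?thesis using True by simp
next
  case False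
  then have "{0..E} \<inter> {k. L + k \<le> i} = {}" by auto
  then show ?thesis using False by simp
qed

lemma X_formula: "measure_pmf.prob (pmf_of_set {0..E}) {k. L + k \<le> (i::nat)}
   = (if L \<le> i then real (min E (i - L)) + 1 else 0) / (real E + 1)"
proof -
  have "measure_pmf.prob (pmf_of_set {0..E}) {k. L + k \<le> (i::nat)} = card ({0..E} \<inter> {k. L + k \<le> i}) / card {0..E}"
    by (rule measure_pmf_of_set) auto
  then show ?thesis unfolding cnt_formula by (simp add: add.commute)
qed

lemma X_formula_real: "measure_pmf.prob (pmf_of_set {0..E}) {k. L + k \<le> (i::nat)}
   = (if real L \<le> real i then min (real E) (real i - real L) + 1 else 0) / (real E + 1)"
  unfolding X_formula by (auto simp: of_nat_diff min_def)

lemma X_refl: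
  assumes "Lf + Lg + E = M" "i < (M::nat)"
  shows "measure_pmf.prob (pmf_of_set {0..E}) {k. Lf + k \<le> i}
       = 1 - measure_pmf.prob (pmf_of_set {0..E}) {k. Lg + k \<le> M - 1 - i}"
proof -
  have "(if Lf \<le> i then min E (i - Lf) + 1 else 0) + (if Lg \<le> M - 1 - i then min E (M - 1 - i - Lg) + 1 else 0) = E + 1"
    using assms by (auto simp: min_def)
  then have "real (if Lf \<le> i then min E (i - Lf) + 1 else 0) + real (if Lg \<le> M - 1 - i then min E (M - 1 - i - Lg) + 1 else 0) = real E + 1"
    by (metis of_nat_add of_nat_1)
  then have "(if Lf \<le> i then real (min E (i - Lf)) + 1 else 0) + (if Lg \<le> M - 1 - i then real (min E (M - 1 - i - Lg)) + 1 else 0) = real E + 1"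
    by (auto split: if_splits)
  then show ?thesis unfolding X_formula by (simp add: field_simps)
qed

lemma real_card_filter: "real (card {m \<in> {..<(M::nat)}. P m}) = (\<Sum>m<M. if P m then 1 else 0)"
proof -
  have "(\<Sum>m<M. if P m then 1 else 0::real) = (\<Sum>m\<in>{m \<in> {..<M}. P m}. 1)"
    by (rule sum.inter_filter[symmetric]) simp
  then show ?thesis by simp
qed

context sbc begin

lemma dens_prob: assumes y: "y \<in> space Y" shows "prob_space (density Th (\<lambda>\<theta>. ennreal (\<phi> \<theta> y)))"
proof (rule prob_spaceI)
  have m: "(\<lambda>\<theta>. ennreal (\<phi> \<theta> y)) \<in> borel_measurable Th"
    using phim1[OF phi_meas y] by simp
  have "emeasure (density Th (\<lambda>\<theta>. ennreal (\<phi> \<theta> y))) (space Th) = (\<integral>\<^sup>+ \<theta>. ennreal (\<phi> \<theta> y) * indicator (space Th) \<theta> \<partial>Th)"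
    by (rule emeasure_density[OF m sets.top])
  also have "\<dots> = (\<integral>\<^sup>+ \<theta>. ennreal (\<phi> \<theta> y) \<partial>Th)"
    by (intro nn_integral_cong) simp
  also have "\<dots> = 1"
    using phi_int[OF y] phi_nonneg phi_norm y by (subst nn_integral_eq_integral) auto
  finally show "emeasure (density Th (\<lambda>\<theta>. ennreal (\<phi> \<theta> y))) (space (density Th (\<lambda>\<theta>. ennreal (\<phi> \<theta> y)))) = 1"
    by simp
qed

lemma S_prob: "y \<in> space Y \<Longrightarrow> prob_space (sample_measure Th \<phi> M y)"
  unfolding sample_measure_def by (rule prob_space_PiM) (rule dens_prob)

lemma S_space: "\<theta>s \<in> space (sample_measure Th \<phi> M y) \<Longrightarrow> m < M \<Longrightarrow> \<theta>s m \<in> space Th"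
  unfolding sample_measure_def space_PiM by (auto simp: PiE_def Pi_def)

lemma comp_meas: "m < M \<Longrightarrow> (\<lambda>\<theta>s. \<theta>s m) \<in> measurable (sample_measure Th \<phi> M y) Th"
proof -
  assume m: "m < M"
  have "(\<lambda>\<theta>s. \<theta>s m) \<in> measurable (sample_measure Th \<phi> M y) (density Th (\<lambda>\<theta>. ennreal (\<phi> \<theta> y)))"
    unfolding sample_measure_def using m by (intro measurable_component_singleton) simp
  then show ?thesis by (simp add: measurable_cong_sets[OF refl sets_density])
qed

context
  fixes F :: "'a \<Rightarrow> 'b \<Rightarrow> real"
  assumes Fm: "(\<lambda>(\<theta>, y). F \<theta> y) \<in> borel_measurable (Th \<Otimes>\<^sub>M Y)"
begin

definition Xf where
  "Xf M j y \<theta>t \<theta>s = measure_pmf.prob (pmf_of_set {0..N_equals M F \<theta>s \<theta>t y}) {k. N_less M F \<theta>s \<theta>t y + k \<le> j}"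

lemma R_Xf: "R_SBC Th \<phi> F M j \<theta>t y = (\<integral>\<theta>s. Xf M j y \<theta>t \<theta>s \<partial>sample_measure Th \<phi> M y)"
  unfolding R_SBC_def Xf_def ..

lemma Xf_meas:
  assumes y: "y \<in> space Y"
  shows "(\<lambda>(\<theta>t, \<theta>s). Xf M j y \<theta>t \<theta>s) \<in> borel_measurable (Th \<Otimes>\<^sub>M sample_measure Th \<phi> M y)"
proof -
  let ?S = "sample_measure Th \<phi> M y"
  have Fy: "(\<lambda>\<theta>. F \<theta> y) \<in> borel_measurable Th" using Fm1[OF Fm y] .
  have Gt[measurable]: "(\<lambda>p. F (fst p) y) \<in> borel_measurable (Th \<Otimes>\<^sub>M ?S)"
    by (rule measurable_compose[OF measurable_fst Fy])
  have Gc: "(\<lambda>p. F (snd p m) y) \<in> borel_measurable (Th \<Otimes>\<^sub>M ?S)" if m: "m < M" for m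
    by (rule measurable_compose[OF measurable_compose[OF measurable_snd comp_meas[OF m]] Fy])
  have Lm[measurable]: "(\<lambda>p. \<Sum>m<M. if F (snd p m) y < F (fst p) y then 1 else 0::real) \<in> borel_measurable (Th \<Otimes>\<^sub>M ?S)"
  proof (rule borel_measurable_sum)
    fix m assume "m \<in> {..<M}"
    then have [measurable]: "(\<lambda>p. F (snd p m) y) \<in> borel_measurable (Th \<Otimes>\<^sub>M ?S)" using Gc by simp
    show "(\<lambda>p. if F (snd p m) y < F (fst p) y then 1 else 0::real) \<in> borel_measurable (Th \<Otimes>\<^sub>M ?S)"
      by measurable
  qed
  have Em[measurable]: "(\<lambda>p. \<Sum>m<M. if F (snd p m) y = F (fst p) y then 1 else 0::real) \<in> borel_measurable (Th \<Otimes>\<^sub>M ?S)"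
  proof (rule borel_measurable_sum)
    fix m assume "m \<in> {..<M}"
    then have [measurable]: "(\<lambda>p. F (snd p m) y) \<in> borel_measurable (Th \<Otimes>\<^sub>M ?S)" using Gc by simp
    show "(\<lambda>p. if F (snd p m) y = F (fst p) y then 1 else 0::real) \<in> borel_measurable (Th \<Otimes>\<^sub>M ?S)"
      by measurable
  qed
  have e: "(\<lambda>(\<theta>t, \<theta>s). Xf M j y \<theta>t \<theta>s) = (\<lambda>p.
     (if (\<Sum>m<M. if F (snd p m) y < F (fst p) y then 1 else 0::real) \<le> real j
      then min (\<Sum>m<M. if F (snd p m) y = F (fst p) y then 1 else 0::real) (real j - (\<Sum>m<M. if F (snd p m) y < F (fst p) y then 1 else 0::real)) + 1 else 0)
     / ((\<Sum>m<M. if F (snd p m) y = F (fst p) y then 1 else 0::real) + 1))"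
    unfolding Xf_def X_formula_real N_less_def N_equals_def real_card_filter by (auto simp: fun_eq_iff)
  show ?thesis unfolding e by measurable
qed

lemma Xf_range: "0 \<le> Xf M j y \<theta>t \<theta>s \<and> Xf M j y \<theta>t \<theta>s \<le> 1"
  unfolding Xf_def by (simp add: measure_pmf.prob_le_1)

lemma Xf_int:
  assumes y: "y \<in> space Y" and th: "\<theta>t \<in> space Th"
  shows "integrable (sample_measure Th \<phi> M y) (Xf M j y \<theta>t)"
proof -
  interpret S: prob_space "sample_measure Th \<phi> M y" by (rule S_prob[OF y])
  have "Xf M j y \<theta>t \<in> borel_measurable (sample_measure Th \<phi> M y)"
    using measurable_compose[OF measurable_Pair1'[OF th] Xf_meas[OF y]] by simp
  then show ?thesis
    by (intro S.integrable_const_bound[where B=1]) (auto simp: Xf_range abs_le_iff intro!: AE_I2 order_trans[OF _ zero_le_one] dest: spec[of _ 0])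
qed

lemma R_meas: "y \<in> space Y \<Longrightarrow> (\<lambda>\<theta>t. R_SBC Th \<phi> F M j \<theta>t y) \<in> borel_measurable Th"
proof -
  assume y: "y \<in> space Y"
  interpret S: prob_space "sample_measure Th \<phi> M y" by (rule S_prob[OF y])
  show ?thesis unfolding R_Xf
    by (rule S.borel_measurable_lebesgue_integral[OF Xf_meas[OF y]])
qed

lemma R_range: "y \<in> space Y \<Longrightarrow> \<theta>t \<in> space Th \<Longrightarrow> 0 \<le> R_SBC Th \<phi> F M j \<theta>t y \<and> R_SBC Th \<phi> F M j \<theta>t y \<le> 1"
proof -
  assume y: "y \<in> space Y" and th: "\<theta>t \<in> space Th"
  interpret S: prob_space "sample_measure Th \<phi> M y" by (rule S_prob[OF y])
  have "R_SBC Th \<phi> F M j \<theta>t y \<le> (\<integral>\<theta>s. 1 \<partial>sample_measure Th \<phi> M y)"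
    unfolding R_Xf by (intro Bochner_Integration.integral_mono Xf_int[OF y th]) (auto simp: Xf_range)
  moreover have "0 \<le> R_SBC Th \<phi> F M j \<theta>t y"
    unfolding R_Xf by (intro Bochner_Integration.integral_nonneg) (simp add: Xf_range)
  ultimately show ?thesis by (simp add: S.prob_space)
qed

lemma QR_int: "y \<in> space Y \<Longrightarrow> integrable Th (\<lambda>\<theta>t. pst \<theta>t y * R_SBC Th \<phi> F M j \<theta>t y)"
proof -
  assume y: "y \<in> space Y"
  have [measurable]: "(\<lambda>\<theta>t. R_SBC Th \<phi> F M j \<theta>t y) \<in> borel_measurable Th" by (rule R_meas[OF y])
  have [measurable]: "(\<lambda>\<theta>t. pst \<theta>t y) \<in> borel_measurable Th"
    using pst_meas[OF measurable_ident_sets[OF refl] measurable_const[OF y]] by simp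
  show ?thesis
  proof (rule Bochner_Integration.integrable_bound[OF pst_int[OF y]])
    show "(\<lambda>\<theta>t. pst \<theta>t y * R_SBC Th \<phi> F M j \<theta>t y) \<in> borel_measurable Th" by measurable
    show "AE x in Th. norm (pst x y * R_SBC Th \<phi> F M j x y) \<le> norm (pst x y)"
      using R_range[OF y] pst_nonneg[OF y] by (intro AE_I2) (auto simp: abs_mult intro!: mult_left_le)
  qed
qed

end

end

context sbc begin

lemma M_dec:
  assumes Fm: "(\<lambda>(\<theta>, y). F \<theta> y) \<in> borel_measurable (Th \<Otimes>\<^sub>M Y)"
    and Gm: "(\<lambda>(\<theta>, y). G \<theta> y) \<in> borel_measurable (Th \<Otimes>\<^sub>M Y)"
    and rev: "\<forall>y\<in>space Y. \<forall>\<theta>\<in>space Th. \<forall>\<theta>'\<in>space Th. (F \<theta> y \<le> F \<theta>' y) = (G \<theta>' y \<le> G \<theta> y)"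
    and pG: "passes_M_SBC Th Y prior obs \<phi> M G"
  shows "passes_M_SBC Th Y prior obs \<phi> M F"
  unfolding passes_M_SBC_def
proof (intro allI impI)
  fix i assume iM: "i < M"
  define j where "j = M - 1 - i"
  have X: "Xf F M i y \<theta>t \<theta>s = 1 - Xf G M j y \<theta>t \<theta>s"
    if y: "y \<in> space Y" and th: "\<theta>t \<in> space Th" and ths: "\<theta>s \<in> space (sample_measure Th \<phi> M y)" for y \<theta>t \<theta>s
  proof -
    have sp: "\<theta>s m \<in> space Th" if "m < M" for m using S_space[OF ths that] .
    have lt: "(F (\<theta>s m) y < F \<theta>t y) = (G \<theta>t y < G (\<theta>s m) y)" if "m < M" for m
    proof -
      have "(F \<theta>t y \<le> F (\<theta>s m) y) = (G (\<theta>s m) y \<le> G \<theta>t y)" using rev y th sp[OF that] by blast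
      then show ?thesis by linarith
    qed
    have eq: "(F (\<theta>s m) y = F \<theta>t y) = (G (\<theta>s m) y = G \<theta>t y)" if "m < M" for m
    proof -
      have "(F \<theta>t y \<le> F (\<theta>s m) y) = (G (\<theta>s m) y \<le> G \<theta>t y)" "(F (\<theta>s m) y \<le> F \<theta>t y) = (G \<theta>t y \<le> G (\<theta>s m) y)"
        using rev y th sp[OF that] by blast+
      then show ?thesis by linarith
    qed
    have E: "N_equals M F \<theta>s \<theta>t y = N_equals M G \<theta>s \<theta>t y"
      unfolding N_equals_def using eq by (intro arg_cong[where f=card]) auto
    have Lf: "N_less M F \<theta>s \<theta>t y = card {m \<in> {..<M}. G \<theta>t y < G (\<theta>s m) y}"
      unfolding N_less_def using lt by (intro arg_cong[where f=card]) auto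
    have "real (card {m \<in> {..<M}. G \<theta>t y < G (\<theta>s m) y}) + real (N_less M G \<theta>s \<theta>t y) + real (N_equals M G \<theta>s \<theta>t y)
        = (\<Sum>m<M. (if G \<theta>t y < G (\<theta>s m) y then 1 else 0) + (if G (\<theta>s m) y < G \<theta>t y then 1 else 0) + (if G (\<theta>s m) y = G \<theta>t y then 1 else 0))"
      unfolding N_less_def N_equals_def real_card_filter by (simp add: sum.distrib)
    also have "\<dots> = (\<Sum>m<M. 1)"
      by (intro sum.cong refl) auto
    finally have "real (card {m \<in> {..<M}. G \<theta>t y < G (\<theta>s m) y} + N_less M G \<theta>s \<theta>t y + N_equals M G \<theta>s \<theta>t y) = real M"
      by simp
    then have part: "card {m \<in> {..<M}. G \<theta>t y < G (\<theta>s m) y} + N_less M G \<theta>s \<theta>t y + N_equals M G \<theta>s \<theta>t y = M"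
      by (simp only: of_nat_eq_iff)
    show ?thesis
      unfolding Xf_def[OF Fm] Xf_def[OF Gm] E Lf j_def
      by (rule X_refl[OF part iM])
  qed
  have R: "R_SBC Th \<phi> F M i \<theta>t y = 1 - R_SBC Th \<phi> G M j \<theta>t y"
    if y: "y \<in> space Y" and th: "\<theta>t \<in> space Th" for y \<theta>t
  proof -
    interpret S: prob_space "sample_measure Th \<phi> M y" by (rule S_prob[OF y])
    have "R_SBC Th \<phi> F M i \<theta>t y = (\<integral>\<theta>s. 1 - Xf G M j y \<theta>t \<theta>s \<partial>sample_measure Th \<phi> M y)"
      unfolding R_Xf[OF Fm] using X[OF y th] by (intro Bochner_Integration.integral_cong refl) auto
    also have "\<dots> = (\<integral>\<theta>s. 1 \<partial>sample_measure Th \<phi> M y) - R_SBC Th \<phi> G M j \<theta>t y"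
      unfolding R_Xf[OF Gm] by (rule Bochner_Integration.integral_diff[OF S.integrable_const Xf_int[OF Gm y th]])
    finally show ?thesis by (simp add: S.prob_space)
  qed
  have Q: "Q_SBC Th prior obs \<phi> F M i y * marg Th prior obs y = mg y - Q_SBC Th prior obs \<phi> G M j y * marg Th prior obs y"
    if y: "y \<in> space Y" for y
  proof -
    have "Q_SBC Th prior obs \<phi> F M i y = (\<integral>\<theta>t. pst \<theta>t y - pst \<theta>t y * R_SBC Th \<phi> G M j \<theta>t y \<partial>Th)"
      unfolding Q_SBC_def pst_def[symmetric] using R[OF y]
      by (intro Bochner_Integration.integral_cong refl) (simp add: right_diff_distrib)
    also have "\<dots> = (\<integral>\<theta>t. pst \<theta>t y \<partial>Th) - Q_SBC Th prior obs \<phi> G M j y"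
      unfolding Q_SBC_def pst_def[symmetric]
      by (rule Bochner_Integration.integral_diff[OF pst_int[OF y] QR_int[OF Gm y]])
    finally have e: "Q_SBC Th prior obs \<phi> F M i y = (\<integral>\<theta>t. pst \<theta>t y \<partial>Th) - Q_SBC Th prior obs \<phi> G M j y" .
    show ?thesis
    proof (cases "mg y = 0")
      case True then show ?thesis by (simp add: mg_def)
    next
      case False
      then have "Q_SBC Th prior obs \<phi> F M i y = 1 - Q_SBC Th prior obs \<phi> G M j y" using e pst_norm[OF False] by simp
      then show ?thesis by (simp add: left_diff_distrib mg_def)
    qed
  qed
  have jM: "j < M" using iM unfolding j_def by simp
  have IG: "(\<integral>y. Q_SBC Th prior obs \<phi> G M j y * marg Th prior obs y \<partial>Y) = (real j + 1) / (real M + 1)"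
    using pG jM unfolding passes_M_SBC_def by simp
  then have intG: "integrable Y (\<lambda>y. Q_SBC Th prior obs \<phi> G M j y * marg Th prior obs y)"
    using not_integrable_integral_eq by fastforce
  have "(\<integral>y. Q_SBC Th prior obs \<phi> F M i y * marg Th prior obs y \<partial>Y) = (\<integral>y. mg y - Q_SBC Th prior obs \<phi> G M j y * marg Th prior obs y \<partial>Y)"
    using Q by (intro Bochner_Integration.integral_cong) auto
  also have "\<dots> = (\<integral>y. mg y \<partial>Y) - (\<integral>y. Q_SBC Th prior obs \<phi> G M j y * marg Th prior obs y \<partial>Y)"
    by (rule Bochner_Integration.integral_diff[OF mg_int intG])
  also have "\<dots> = 1 - (real j + 1) / (real M + 1)" using mg_norm IG by simp
  also have "\<dots> = (real i + 1) / (real M + 1)"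
    using iM unfolding j_def by (simp add: field_simps of_nat_diff)
  finally show "(\<integral>y. Q_SBC Th prior obs \<phi> F M i y * marg Th prior obs y \<partial>Y) = (real i + 1) / (real M + 1)" .
qed

lemma M_inc:
  assumes same: "\<forall>y\<in>space Y. \<forall>\<theta>\<in>space Th. \<forall>\<theta>'\<in>space Th. (F \<theta> y \<le> F \<theta>' y) = (G \<theta> y \<le> G \<theta>' y)"
  shows "passes_M_SBC Th Y prior obs \<phi> M F = passes_M_SBC Th Y prior obs \<phi> M G"
proof -
  have R: "R_SBC Th \<phi> F M i \<theta>t y = R_SBC Th \<phi> G M i \<theta>t y"
    if y: "y \<in> space Y" and th: "\<theta>t \<in> space Th" for y \<theta>t i
    unfolding R_SBC_def
  proof (intro Bochner_Integration.integral_cong refl)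
    fix \<theta>s assume ths: "\<theta>s \<in> space (sample_measure Th \<phi> M y)"
    have sp: "\<theta>s m \<in> space Th" if "m < M" for m using S_space[OF ths that] .
    have lt: "(F (\<theta>s m) y < F \<theta>t y) = (G (\<theta>s m) y < G \<theta>t y)" if "m < M" for m
    proof -
      have "(F \<theta>t y \<le> F (\<theta>s m) y) = (G \<theta>t y \<le> G (\<theta>s m) y)" using same y th sp[OF that] by blast
      then show ?thesis by linarith
    qed
    have eq: "(F (\<theta>s m) y = F \<theta>t y) = (G (\<theta>s m) y = G \<theta>t y)" if "m < M" for m
    proof -
      have "(F \<theta>t y \<le> F (\<theta>s m) y) = (G \<theta>t y \<le> G (\<theta>s m) y)" "(F (\<theta>s m) y \<le> F \<theta>t y) = (G (\<theta>s m) y \<le> G \<theta>t y)"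
        using same y th sp[OF that] by blast+
      then show ?thesis by linarith
    qed
    have E: "N_equals M F \<theta>s \<theta>t y = N_equals M G \<theta>s \<theta>t y"
      unfolding N_equals_def using eq by (intro arg_cong[where f=card]) auto
    have L: "N_less M F \<theta>s \<theta>t y = N_less M G \<theta>s \<theta>t y"
      unfolding N_less_def using lt by (intro arg_cong[where f=card]) auto
    show "measure_pmf.prob (pmf_of_set {0..N_equals M F \<theta>s \<theta>t y}) {k. N_less M F \<theta>s \<theta>t y + k \<le> i} =
          measure_pmf.prob (pmf_of_set {0..N_equals M G \<theta>s \<theta>t y}) {k. N_less M G \<theta>s \<theta>t y + k \<le> i}"
      unfolding E L ..
  qed
  have "Q_SBC Th prior obs \<phi> F M i y = Q_SBC Th prior obs \<phi> G M i y" if "y \<in> space Y" for y i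
    unfolding Q_SBC_def using R that by (intro Bochner_Integration.integral_cong refl) simp
  then have "(\<integral>y. Q_SBC Th prior obs \<phi> F M i y * marg Th prior obs y \<partial>Y) = (\<integral>y. Q_SBC Th prior obs \<phi> G M i y * marg Th prior obs y \<partial>Y)" for i
    by (intro Bochner_Integration.integral_cong refl) simp
  then show ?thesis unfolding passes_M_SBC_def by simp
qed

end

theorem theorem8:
  fixes Th :: "'a measure" and Y :: "'b measure"
    and prior :: "'a \<Rightarrow> real" and obs :: "'b \<Rightarrow> 'a \<Rightarrow> real"
    and \<phi> f g :: "'a \<Rightarrow> 'b \<Rightarrow> real" and h :: "'b \<Rightarrow> real \<Rightarrow> real"
  assumes sfTh: "sigma_finite_measure Th" and sfY: "sigma_finite_measure Y"
    and prior_meas: "prior \<in> borel_measurable Th"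
    and prior_nonneg: "\<forall>\<theta>\<in>space Th. prior \<theta> \<ge> 0"
    and prior_norm: "(\<integral>\<theta>. prior \<theta> \<partial>Th) = 1"
    and obs_meas: "(\<lambda>(y, \<theta>). obs y \<theta>) \<in> borel_measurable (Y \<Otimes>\<^sub>M Th)"
    and obs_nonneg: "\<forall>y\<in>space Y. \<forall>\<theta>\<in>space Th. obs y \<theta> \<ge> 0"
    and obs_norm: "\<forall>\<theta>\<in>space Th. (\<integral>y. obs y \<theta> \<partial>Y) = 1"
    and phi_meas: "(\<lambda>(\<theta>, y). \<phi> \<theta> y) \<in> borel_measurable (Th \<Otimes>\<^sub>M Y)"
    and phi_nonneg: "\<forall>y\<in>space Y. \<forall>\<theta>\<in>space Th. \<phi> \<theta> y \<ge> 0"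
    and phi_norm: "\<forall>y\<in>space Y. (\<integral>\<theta>. \<phi> \<theta> y \<partial>Th) = 1"
    and f_meas: "(\<lambda>(\<theta>, y). f \<theta> y) \<in> borel_measurable (Th \<Otimes>\<^sub>M Y)"
    and g_meas: "(\<lambda>(\<theta>, y). g \<theta> y) \<in> borel_measurable (Th \<Otimes>\<^sub>M Y)"
    and h_meas: "\<forall>y\<in>space Y. h y \<in> borel_measurable borel"
    and fgh: "\<forall>y\<in>space Y. \<forall>\<theta>\<in>space Th. f \<theta> y = h y (g \<theta> y)"
    and h_mono: "(\<forall>y\<in>space Y. strict_mono (h y))
               \<or> (\<forall>y\<in>space Y. \<forall>a b. a < b \<longrightarrow> h y b < h y a)"
  shows "(passes_cont_SBC Th Y prior obs \<phi> f \<longleftrightarrow> passes_cont_SBC Th Y prior obs \<phi> g)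
       \<and> (\<forall>M::nat. passes_M_SBC Th Y prior obs \<phi> M f \<longleftrightarrow> passes_M_SBC Th Y prior obs \<phi> M g)"
  proof -
  interpret sbc Th Y prior obs \<phi>
    by (rule sbc.intro[OF sfTh sfY prior_meas prior_nonneg prior_norm obs_meas obs_nonneg obs_norm
      phi_meas phi_nonneg phi_norm])
  show ?thesis
  proof (cases "\<forall>y\<in>space Y. strict_mono (h y)")
    case True
    have same: "\<forall>y\<in>space Y. \<forall>\<theta>\<in>space Th. \<forall>\<theta>'\<in>space Th. (f \<theta> y \<le> f \<theta>' y) = (g \<theta> y \<le> g \<theta>' y)"
      using True fgh by (simp add: strict_mono_less_eq)
    show ?thesis using cont_inc[OF f_meas g_meas same] M_inc[OF same] by blast
  next
    case False
    then have dec: "\<forall>y\<in>space Y. \<forall>a b. a < b \<longrightarrow> h y b < h y a" using h_mono by blast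
    have rev: "\<forall>y\<in>space Y. \<forall>\<theta>\<in>space Th. \<forall>\<theta>'\<in>space Th. (f \<theta> y \<le> f \<theta>' y) = (g \<theta>' y \<le> g \<theta> y)"
    proof (intro ballI)
      fix y \<theta> \<theta>' assume y: "y \<in> space Y" and th: "\<theta> \<in> space Th" and th': "\<theta>' \<in> space Th"
      have d: "\<And>a b. a < b \<Longrightarrow> h y b < h y a" using dec y by blast
      have "(h y (g \<theta> y) \<le> h y (g \<theta>' y)) = (g \<theta>' y \<le> g \<theta> y)"
      proof
        assume "h y (g \<theta> y) \<le> h y (g \<theta>' y)"
        then show "g \<theta>' y \<le> g \<theta> y" using d[of "g \<theta> y" "g \<theta>' y"] by linarith
      next
        assume a: "g \<theta>' y \<le> g \<theta> y"
        show "h y (g \<theta> y) \<le> h y (g \<theta>' y)"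
        proof (cases "g \<theta>' y = g \<theta> y")
          case True then show ?thesis by simp
        next
          case False then show ?thesis using a d[of "g \<theta>' y" "g \<theta> y"] by linarith
        qed
      qed
      then show "(f \<theta> y \<le> f \<theta>' y) = (g \<theta>' y \<le> g \<theta> y)" using fgh y th th' by simp
    qed
    have rev': "\<forall>y\<in>space Y. \<forall>\<theta>\<in>space Th. \<forall>\<theta>'\<in>space Th. (g \<theta> y \<le> g \<theta>' y) = (f \<theta>' y \<le> f \<theta> y)"
      using rev by blast
    show ?thesis
      using cont_dec[OF f_meas g_meas rev] cont_dec[OF g_meas f_meas rev']
        M_dec[OF f_meas g_meas rev] M_dec[OF g_meas f_meas rev'] by blast
  qed
qed

end
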